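(* Let $p,q$ be positive integers with $\gcd(p,q)=2$. On the square billiard, consider the billiard trajectory generated by $\langle P_0,\alpha_0\rangle$ with $\tan(\alpha_0)=p/q$ fixed and $P_0\in[0,1)$. Then: (i) if $P_0=\frac{2\ell}{p}$ for some $\ell\in\{0,1,\dots,\frac{p}{2}-1\}$, the trajectory is a singular orbit, and it lies on a generalised diagonal of length $\frac{p+q}{2}-2$ having exactly $\frac{p}{2}-1$ collision points on the sides $\mathsf{AB}$ or $\mathsf{CD}$ and exactly $\frac{q}{2}-1$ collision points on the sides $\mathsf{BC}$ or $\mathsf{DA}$; (ii) otherwise the trajectory is a periodic orbit of period $p+q$ belonging to the class $\mathcal{C}_{p+q}(p)$.
   Context: Square billiard: unit square with vertices $\mathsf{A}=(0,0),\mathsf{B}=(1,0),\mathsf{C}=(1,1),\mathsf{D}=(0,1)$; a point moves in straight lines, reflecting elastically at the sides; a trajectory reaching a vertex terminates (singular orbit). A pair $\langle P_0,\alpha_0\rangle$ generates the trajectory with a collision at $(P_0,0)$ on $\mathsf{AB}$ whose outgoing segment makes angle $\alpha_0\in(0,\pi/2]$ with $\mathsf{AB}$ (direction of motion not distinguished; for $P_0=0$ the trajectory starts at vertex $\mathsf{A}$). Period of a periodic orbit = number of distinct collision points. The class $\mathcal{C}_K(p)$ consists of all period-$K$ orbits with exactly $p$ distinct collision points on $\mathsf{AB}$ or $\mathsf{CD}$ (and $K-p$ on $\mathsf{BC}$ or $\mathsf{DA}$). A generalised diagonal is a singular orbit starting at a vertex; its length is the number of its non-vertex collision points. *)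

theory Defs
  imports Complex_Main
begin

text \<open>Square billiard on the unit square with vertices A=(0,0), B=(1,0), C=(1,1), D=(0,1).
  A billiard state is a pair (collision point, velocity).\<close>

type_synonym bstate = "(real \<times> real) \<times> (real \<times> real)"

definition sq_vertices :: "(real \<times> real) set" where
  "sq_vertices = {(0,0), (1,0), (1,1), (0,1)}"

definition hit_time :: "real \<Rightarrow> real \<Rightarrow> real option" where
  "hit_time c v = (if v > 0 then Some ((1 - c) / v) else if v < 0 then Some (- c / v) else None)"

definition flight_time :: "real option \<Rightarrow> real option \<Rightarrow> real" where
  "flight_time a b = (case (a, b) of
      (Some s, Some t) \<Rightarrow> min s t
    | (Some s, None) \<Rightarrow> s
    | (None, Some t) \<Rightarrow> t
    | (None, None) \<Rightarrow> 0)"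

definition bstep :: "bstate \<Rightarrow> bstate" where
  "bstep s = (case s of ((x, y), (vx, vy)) \<Rightarrow>
     (let t = flight_time (hit_time x vx) (hit_time y vy);
          x' = x + t * vx; y' = y + t * vy;
          vx' = (if x' = 0 \<or> x' = 1 then - vx else vx);
          vy' = (if y' = 0 \<or> y' = 1 then - vy else vy)
      in ((x', y'), (vx', vy'))))"

definition bstates :: "bstate \<Rightarrow> nat \<Rightarrow> bstate" where
  "bstates s n = (bstep ^^ n) s"

text \<open>Collision points of the trajectory started in state s, followed forward until it
  (possibly) reaches a vertex, where it terminates (the vertex itself is included).
  The initial point is always included (it may itself be a vertex, e.g. P0 = 0).\<close>
definition fwd_points :: "bstate \<Rightarrow> (real \<times> real) set" where
  "fwd_points s = {fst (bstates s n) | n.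
      \<forall>m. 0 < m \<and> m < n \<longrightarrow> fst (bstates s m) \<notin> sq_vertices}"

text \<open>The trajectory generated by <P0, alpha0>: collision at (P0,0) on AB with
  outgoing segment at angle alpha0 with AB.  Direction of motion is not distinguished,
  so the trajectory consists of the forward part (velocity (cos a, sin a)) and the
  backward part, which (after the reflection at (P0,0)) leaves (P0,0) with velocity
  (-cos a, sin a).  For P0 = 0 the trajectory starts at the vertex A.\<close>
definition gen_fwd :: "real \<Rightarrow> real \<Rightarrow> bstate" where
  "gen_fwd P0 a = ((P0, 0), (cos a, sin a))"

definition gen_bwd :: "real \<Rightarrow> real \<Rightarrow> bstate" where
  "gen_bwd P0 a = ((P0, 0), (- cos a, sin a))"

definition traj_points :: "real \<Rightarrow> real \<Rightarrow> (real \<times> real) set" where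
  "traj_points P0 a = fwd_points (gen_fwd P0 a) \<union>
      (if P0 = 0 then {} else fwd_points (gen_bwd P0 a))"

definition singular_orbit :: "real \<Rightarrow> real \<Rightarrow> bool" where
  "singular_orbit P0 a \<longleftrightarrow> traj_points P0 a \<inter> sq_vertices \<noteq> {}"

definition periodic_orbit :: "real \<Rightarrow> real \<Rightarrow> nat \<Rightarrow> bool" where
  "periodic_orbit P0 a K \<longleftrightarrow> \<not> singular_orbit P0 a \<and>
     (\<exists>N>0. bstates (gen_fwd P0 a) N = gen_fwd P0 a) \<and>
     finite (traj_points P0 a) \<and> card (traj_points P0 a) = K"

definition on_AB_CD :: "real \<times> real \<Rightarrow> bool" where
  "on_AB_CD P \<longleftrightarrow> snd P = 0 \<or> snd P = 1"

definition on_BC_DA :: "real \<times> real \<Rightarrow> bool" where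
  "on_BC_DA P \<longleftrightarrow> fst P = 0 \<or> fst P = 1"

definition in_class_C :: "nat \<Rightarrow> nat \<Rightarrow> real \<Rightarrow> real \<Rightarrow> bool" where
  "in_class_C K p P0 a \<longleftrightarrow> periodic_orbit P0 a K \<and>
     card {P \<in> traj_points P0 a. on_AB_CD P} = p \<and>
     card {P \<in> traj_points P0 a. on_BC_DA P} = K - p"

definition inward :: "real \<times> real \<Rightarrow> real \<times> real \<Rightarrow> bool" where
  "inward V v \<longleftrightarrow> fst v \<noteq> 0 \<and> snd v \<noteq> 0 \<and>
     (fst V = 0 \<longrightarrow> fst v > 0) \<and> (fst V = 1 \<longrightarrow> fst v < 0) \<and>
     (snd V = 0 \<longrightarrow> snd v > 0) \<and> (snd V = 1 \<longrightarrow> snd v < 0)"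

definition gen_diagonal :: "(real \<times> real) set \<Rightarrow> bool" where
  "gen_diagonal G \<longleftrightarrow> (\<exists>V v. V \<in> sq_vertices \<and> inward V v \<and> G = fwd_points (V, v))"

definition diag_length :: "(real \<times> real) set \<Rightarrow> nat" where
  "diag_length G = card (G - sq_vertices)"

end

theory Submission
  imports Defs
begin


definition fd :: "real \<Rightarrow> real" where
  "fd u = (if even \<lfloor>u\<rfloor> then frac u else 1 - frac u)"
definition sgf :: "real \<Rightarrow> real" where
  "sgf u = (if even \<lfloor>u\<rfloor> then 1 else -1)"
definition pt :: "real \<Rightarrow> real \<Rightarrow> real \<Rightarrow> real \<times> real" where
  "pt r P x = (fd x, fd (r*(x-P)))"
definition st :: "real \<Rightarrow> real \<Rightarrow> real \<Rightarrow> real \<Rightarrow> real \<Rightarrow> bstate" where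
  "st c s r P x = (pt r P x, (sgf x * c, sgf (r*(x-P)) * s))"
definition nxt :: "real \<Rightarrow> real \<Rightarrow> real \<Rightarrow> real" where
  "nxt r P x = x + min (1 - frac x) ((1 - frac (r*(x-P)))/r)"
definition EV :: "real \<Rightarrow> real \<Rightarrow> real set" where
  "EV r P = {x. x \<in> \<int> \<or> r*(x-P) \<in> \<int>}"
definition WV :: "real \<Rightarrow> real \<Rightarrow> real set" where
  "WV r P = {x. x \<in> \<int> \<and> r*(x-P) \<in> \<int>}"

lemma fd_move:
  assumes d: "0 < d" "d \<le> 1 - frac u"
  shows "fd (u+d) = fd u + sgf u * d \<and>
         sgf (u+d) = (if fd (u+d) = 0 \<or> fd (u+d) = 1 then - sgf u else sgf u)"
proof (cases "d < 1 - frac u")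
  case True
  have fl: "\<lfloor>u+d\<rfloor> = \<lfloor>u\<rfloor>"
    proof (rule floor_unique)
    show "real_of_int \<lfloor>u\<rfloor> \<le> u + d" using of_int_floor_le[of u] d by linarith
    show "u + d < real_of_int \<lfloor>u\<rfloor> + 1" using True by (simp add: frac_def)
  qed
  have fr: "frac (u+d) = frac u + d" using fl by (simp add: frac_def)
  have f0: "0 < frac (u+d)" using fr d frac_ge_0[of u] by linarith
  have f1: "frac (u+d) < 1" using fr True by linarith
  have "fd (u+d) \<noteq> 0 \<and> fd (u+d) \<noteq> 1" using f0 f1 fl unfolding fd_def by auto
  then show ?thesis using fl fr unfolding fd_def sgf_def by auto
next
  case False
  then have e: "u + d = of_int (\<lfloor>u\<rfloor> + 1)" using d by (simp add: frac_def)
  have fl: "\<lfloor>u+d\<rfloor> = \<lfloor>u\<rfloor> + 1" by (subst e) (simp only: floor_of_int)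
  have fr: "frac (u+d) = 0" by (subst e) (simp only: frac_of_int)
  have dd: "d = 1 - frac u" using False d by auto
  show ?thesis unfolding fd_def sgf_def by (simp only: fl fr) (auto simp: dd)
qed

lemma hit_fd: "c > 0 \<Longrightarrow> hit_time (fd u) (sgf u * c) = Some ((1 - frac u)/c)"
  unfolding hit_time_def fd_def sgf_def by (auto simp: divide_simps)

lemma bstep_st:
  assumes c: "c > 0" and r: "r > 0" and s: "s = c*r"
  shows "bstep (st c s r P x) = st c s r P (nxt r P x)"
proof -
  define y where "y = r*(x-P)"
  define d where "d = min (1 - frac x) ((1 - frac y)/r)"
  define t where "t = min ((1 - frac x)/c) ((1 - frac y)/s)"
  have sp: "s > 0" using c r s by simp
  have td: "t * c = d" unfolding t_def d_def s using c r
    by (simp add: min_mult_distrib_right divide_simps)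
  have tds: "t * s = r * d" using td s by (simp add: algebra_simps)
  have fx1: "frac x < 1" "frac y < 1" by (auto simp: frac_lt_1)
  have d0: "0 < d" unfolding d_def using fx1 r by auto
  have d1: "d \<le> 1 - frac x" unfolding d_def by auto
  have d2: "r*d \<le> 1 - frac y" unfolding d_def using r
    by (metis min.cobounded2 mult.commute pos_le_divide_eq)
  have rd0: "0 < r*d" using r d0 by simp
  note mx = fd_move[OF d0 d1]
  note my = fd_move[OF rd0 d2]
  have ny: "r * (nxt r P x - P) = y + r*d"
    unfolding nxt_def y_def d_def by (simp add: algebra_simps)
  have nx: "nxt r P x = x + d" unfolding nxt_def d_def y_def by simp
  have ft: "flight_time (Some ((1 - frac x)/c)) (Some ((1 - frac y)/s)) = t"
    unfolding flight_time_def t_def by simp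
  have ex: "fd x + t * (sgf x * c) = fd (x + d)" using mx td by (simp add: algebra_simps)
  have ey: "fd y + t * (sgf y * s) = fd (y + r*d)" using my tds by (simp add: algebra_simps)
  show ?thesis
    unfolding bstep_def st_def pt_def
    apply (simp only: hit_fd[OF c] hit_fd[OF sp] prod.case Let_def flip: y_def)
    apply (simp only: ft ex ey ny)
    apply (simp only: nx)
    by (simp add: conjunct2[OF mx] conjunct2[OF my])
qed


lemma fd_01_iff: "(fd u = 0 \<or> fd u = 1) \<longleftrightarrow> u \<in> \<int>"
proof -
  have a: "frac u < 1" "0 \<le> frac u" by (auto simp: frac_lt_1)
  have "(fd u = 0 \<or> fd u = 1) \<longleftrightarrow> frac u = 0"
  proof (cases "even \<lfloor>u\<rfloor>")
    case True then show ?thesis using a unfolding fd_def by simp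
  next
    case False then show ?thesis using a unfolding fd_def by simp
  qed
  then show ?thesis by (simp add: frac_eq_0_iff)
qed

lemma pt_vertex_iff: "pt r P x \<in> sq_vertices \<longleftrightarrow> x \<in> WV r P"
proof -
  have "pt r P x \<in> sq_vertices \<longleftrightarrow> (fd x = 0 \<or> fd x = 1) \<and> (fd (r*(x-P)) = 0 \<or> fd (r*(x-P)) = 1)"
    unfolding sq_vertices_def pt_def by auto
  then show ?thesis unfolding WV_def fd_01_iff by simp
qed

lemma nxt_gt: "r > 0 \<Longrightarrow> x < nxt r P x"
  unfolding nxt_def using frac_lt_1[of x] frac_lt_1[of "r*(x-P)"] by auto

lemma nxt_EV: assumes r: "r > 0" shows "nxt r P x \<in> EV r P"
proof (cases "1 - frac x \<le> (1 - frac (r*(x-P)))/r")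
  case True
  then have "nxt r P x = of_int (\<lfloor>x\<rfloor> + 1)" unfolding nxt_def by (simp add: frac_def)
  then show ?thesis unfolding EV_def by simp
next
  case False
  define y where "y = r*(x-P)"
  have n: "nxt r P x = x + (1 - frac y)/r" using False unfolding nxt_def y_def by simp
  have "r * ((1 - frac y)/r) = 1 - frac y" using r by simp
  then have "r * (nxt r P x - P) = y + (1 - frac y)" unfolding n y_def by (simp add: algebra_simps)
  also have "\<dots> = of_int (\<lfloor>y\<rfloor> + 1)" by (simp add: frac_def)
  finally show ?thesis unfolding EV_def by simp
qed

lemma nxt_least: assumes r: "r > 0" and e: "x < e" "e < nxt r P x" shows "e \<notin> EV r P"
proof
  assume "e \<in> EV r P"
  then consider "e \<in> \<int>" | "r*(e-P) \<in> \<int>" unfolding EV_def by auto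
  then show False
  proof cases
    case 1
    then obtain n where n: "e = of_int n" by (auto elim: Ints_cases)
    have "e < x + (1 - frac x)" using e unfolding nxt_def by simp
    then have a: "e < of_int (\<lfloor>x\<rfloor> + 1)" by (simp add: frac_def)
    have b: "of_int \<lfloor>x\<rfloor> < e" using e of_int_floor_le[of x] by linarith
    from a b n have "\<lfloor>x\<rfloor> < n" "n < \<lfloor>x\<rfloor> + 1" by (simp_all only: of_int_less_iff)
    then show False by simp
  next
    case 2
    then obtain n where n: "r*(e-P) = of_int n" by (auto elim: Ints_cases)
    define y where "y = r*(x-P)"
    have "e < x + (1 - frac y)/r" using e unfolding nxt_def y_def by simp
    then have "r*(e-P) < y + (1 - frac y)" using r unfolding y_def by (simp add: field_simps)
    then have a: "r*(e-P) < of_int (\<lfloor>y\<rfloor> + 1)" by (simp add: frac_def)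
    have "y < r*(e-P)" using e r unfolding y_def by simp
    then have b: "of_int \<lfloor>y\<rfloor> < r*(e-P)" using of_int_floor_le[of y] by linarith
    from a b n have "\<lfloor>y\<rfloor> < n" "n < \<lfloor>y\<rfloor> + 1" by (simp_all only: of_int_less_iff)
    then show False by simp
  qed
qed

lemma finite_EV: assumes r: "r > 0" shows "finite (EV r P \<inter> {lo..hi})"
proof -
  have "EV r P \<inter> {lo..hi} \<subseteq> of_int ` {\<lfloor>lo\<rfloor>..\<lceil>hi\<rceil>} \<union>
        (\<lambda>k. P + of_int k / r) ` {\<lfloor>r*(lo-P)\<rfloor>..\<lceil>r*(hi-P)\<rceil>}"
  proof
    fix x assume x: "x \<in> EV r P \<inter> {lo..hi}"
    then consider "x \<in> \<int>" | "r*(x-P) \<in> \<int>" unfolding EV_def by auto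
    then show "x \<in> of_int ` {\<lfloor>lo\<rfloor>..\<lceil>hi\<rceil>} \<union>
        (\<lambda>k. P + of_int k / r) ` {\<lfloor>r*(lo-P)\<rfloor>..\<lceil>r*(hi-P)\<rceil>}"
    proof cases
      case 1
      then obtain n where n: "x = of_int n" by (auto elim: Ints_cases)
      have "\<lfloor>lo\<rfloor> \<le> \<lfloor>of_int n :: real\<rfloor>" using x n by (intro floor_mono) simp
      moreover have "\<lceil>of_int n :: real\<rceil> \<le> \<lceil>hi\<rceil>" using x n by (intro ceiling_mono) simp
      ultimately have "n \<in> {\<lfloor>lo\<rfloor>..\<lceil>hi\<rceil>}" by simp
      then show ?thesis using n by auto
    next
      case 2
      then obtain k where k: "r*(x-P) = of_int k" by (auto elim: Ints_cases)
      have xe: "x = P + of_int k / r" using k r by (simp add: field_simps)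
      have "r*(lo-P) \<le> r*(x-P)" "r*(x-P) \<le> r*(hi-P)" using x r by auto
      then have "\<lfloor>r*(lo-P)\<rfloor> \<le> \<lfloor>of_int k :: real\<rfloor>" "\<lceil>of_int k :: real\<rceil> \<le> \<lceil>r*(hi-P)\<rceil>"
        unfolding k[symmetric] by (auto intro: floor_mono ceiling_mono)
      then have "k \<in> {\<lfloor>r*(lo-P)\<rfloor>..\<lceil>r*(hi-P)\<rceil>}" by simp
      then show ?thesis using xe by auto
    qed
  qed
  moreover have "finite (of_int ` {\<lfloor>lo\<rfloor>..\<lceil>hi\<rceil>} \<union>
        (\<lambda>k. P + of_int k / r) ` {\<lfloor>r*(lo-P)\<rfloor>..\<lceil>r*(hi-P)\<rceil>} :: real set)" by simp
  ultimately show ?thesis by (rule finite_subset)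
qed

lemma bstates_st:
  assumes "c > 0" "r > 0" "s = c*r"
  shows "bstates (st c s r P x0) n = st c s r P ((nxt r P ^^ n) x0)"
  unfolding bstates_def
  by (induction n) (simp_all add: bstep_st[OF assms])

lemma it_mono: assumes r: "r > 0" shows "m < n \<Longrightarrow> (nxt r P ^^ m) x0 < (nxt r P ^^ n) x0"
proof (induction n)
  case 0 then show ?case by simp
next
  case (Suc n)
  have "(nxt r P ^^ n) x0 < (nxt r P ^^ Suc n) x0" using nxt_gt[OF r] by simp
  then show ?case using Suc by (cases "m = n") auto
qed

lemma it_set:
  assumes r: "r > 0" and x0: "x0 \<in> EV r P"
  shows "EV r P \<inter> {x0..<(nxt r P ^^ n) x0} = (\<lambda>m. (nxt r P ^^ m) x0) ` {..<n}"
proof (induction n)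
  case 0 then show ?case by auto
next
  case (Suc n)
  define a where "a = (nxt r P ^^ n) x0"
  have an: "(nxt r P ^^ Suc n) x0 = nxt r P a" unfolding a_def by simp
  have "0 < n \<Longrightarrow> (nxt r P ^^ 0) x0 < (nxt r P ^^ n) x0" by (rule it_mono[OF r])
  then have ge: "x0 \<le> a" unfolding a_def by (cases n) auto
  have aE: "a \<in> EV r P"
    unfolding a_def by (cases n) (use x0 nxt_EV[OF r] in auto)
  have "EV r P \<inter> {x0..<nxt r P a} = EV r P \<inter> {x0..<a} \<union> {a}"
  proof (intro equalityI subsetI)
    fix e assume e: "e \<in> EV r P \<inter> {x0..<nxt r P a}"
    show "e \<in> EV r P \<inter> {x0..<a} \<union> {a}"
    proof (cases "e < a")
      case True then show ?thesis using e by auto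
    next
      case False
      then have "e = a \<or> a < e" by auto
      then show ?thesis using nxt_least[OF r, of a e P] e by auto
    qed
  next
    fix e assume "e \<in> EV r P \<inter> {x0..<a} \<union> {a}"
    then show "e \<in> EV r P \<inter> {x0..<nxt r P a}" using ge aE nxt_gt[OF r, of a P] by auto
  qed
  also have "\<dots> = (\<lambda>m. (nxt r P ^^ m) x0) ` {..<Suc n}"
    using Suc unfolding a_def by (auto simp: lessThan_Suc)
  finally show ?case using an by simp
qed

lemma it_all:
  assumes r: "r > 0" and x0: "x0 \<in> EV r P" and e: "e \<in> EV r P" "x0 \<le> e"
  shows "\<exists>n. (nxt r P ^^ n) x0 = e"
proof -
  let ?it = "\<lambda>m. (nxt r P ^^ m) x0"
  have "strict_mono ?it" by (rule strict_monoI) (rule it_mono[OF r])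
  then have inj: "inj ?it" by (rule strict_mono_imp_inj_on)
  have "\<exists>n. e < ?it n"
  proof (rule ccontr)
    assume "\<not> ?thesis"
    then have le: "\<And>n. ?it n \<le> e" by (simp add: not_less)
    define K where "K = card (EV r P \<inter> {x0..e})"
    have "?it ` {..<Suc K} \<subseteq> EV r P \<inter> {x0..e}"
      using it_set[OF r x0, of "Suc K"] le by auto
    then have "card (?it ` {..<Suc K}) \<le> K"
      unfolding K_def by (intro card_mono finite_EV[OF r])
    moreover have "card (?it ` {..<Suc K}) = Suc K"
      using inj by (simp add: card_image inj_on_subset)
    ultimately show False by simp
  qed
  then obtain n where "e < ?it n" by blast
  then have "e \<in> ?it ` {..<n}" using it_set[OF r x0, of n] e by auto
  then show ?thesis by auto
qed


lemma it_EV: "r > 0 \<Longrightarrow> x0 \<in> EV r P \<Longrightarrow> (nxt r P ^^ n) x0 \<in> EV r P"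
  by (cases n) (auto intro: nxt_EV)

lemma it_ge: assumes "r > 0" shows "x0 \<le> (nxt r P ^^ n) x0"
proof -
  have "0 < n \<Longrightarrow> (nxt r P ^^ 0) x0 < (nxt r P ^^ n) x0" by (rule it_mono[OF assms])
  then show ?thesis by (cases n) auto
qed

lemma fwd_char:
  assumes "c > 0" "r > 0" "s = c*r"
  shows "fwd_points (st c s r P x0) =
    {pt r P ((nxt r P ^^ n) x0) | n. \<forall>m. 0 < m \<and> m < n \<longrightarrow> (nxt r P ^^ m) x0 \<notin> WV r P}"
  unfolding fwd_points_def bstates_st[OF assms] by (simp add: st_def pt_vertex_iff)

lemma fwd_sub:
  assumes c: "c > 0" and r: "r > 0" and s: "s = c*r"
    and x0: "x0 \<in> EV r P" and z: "z \<in> WV r P" "x0 < z"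
  shows "fwd_points (st c s r P x0) \<subseteq> pt r P ` (EV r P \<inter> {x0..z})"
proof
  fix Q assume "Q \<in> fwd_points (st c s r P x0)"
  then obtain n where Q: "Q = pt r P ((nxt r P ^^ n) x0)"
    and nv: "\<forall>m. 0 < m \<and> m < n \<longrightarrow> (nxt r P ^^ m) x0 \<notin> WV r P"
    unfolding fwd_char[OF c r s] by blast
  have le: "(nxt r P ^^ n) x0 \<le> z"
  proof (rule ccontr)
    assume "\<not> ?thesis"
    then have zl: "z < (nxt r P ^^ n) x0" by simp
    have zE: "z \<in> EV r P" using z unfolding WV_def EV_def by auto
    obtain j where j: "(nxt r P ^^ j) x0 = z" using it_all[OF r x0 zE] z by force
    have "j \<noteq> 0" proof assume "j = 0" then show False using j z by simp qed
    moreover have "j < n"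
    proof (rule ccontr)
      assume "\<not> j < n"
      then have "n \<le> j" by simp
      then have "(nxt r P ^^ n) x0 \<le> (nxt r P ^^ j) x0"
        using it_mono[OF r, of n j P x0] by (cases "n = j") (auto intro: less_imp_le)
      then show False using j zl by simp
    qed
    ultimately show False using nv j z by auto
  qed
  then show "Q \<in> pt r P ` (EV r P \<inter> {x0..z})"
    using Q it_EV[OF r x0] it_ge[OF r] by auto
qed

lemma fwd_eq:
  assumes c: "c > 0" and r: "r > 0" and s: "s = c*r"
    and x0: "x0 \<in> EV r P" and z: "z \<in> WV r P" "x0 < z"
    and zl: "\<And>w. w \<in> WV r P \<Longrightarrow> x0 < w \<Longrightarrow> z \<le> w"
  shows "fwd_points (st c s r P x0) = pt r P ` (EV r P \<inter> {x0..z})"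
proof
  show "fwd_points (st c s r P x0) \<subseteq> pt r P ` (EV r P \<inter> {x0..z})"
    by (rule fwd_sub[OF c r s x0 z])
  show "pt r P ` (EV r P \<inter> {x0..z}) \<subseteq> fwd_points (st c s r P x0)"
  proof
    fix Q assume "Q \<in> pt r P ` (EV r P \<inter> {x0..z})"
    then obtain e where e: "e \<in> EV r P" "x0 \<le> e" "e \<le> z" and Q: "Q = pt r P e" by auto
    obtain n where n: "(nxt r P ^^ n) x0 = e" using it_all[OF r x0 e(1,2)] by blast
    have "\<forall>m. 0 < m \<and> m < n \<longrightarrow> (nxt r P ^^ m) x0 \<notin> WV r P"
    proof (intro allI impI)
      fix m assume m: "0 < m \<and> m < n"
      have "x0 < (nxt r P ^^ m) x0" using it_mono[OF r, of 0 m P x0] m by simp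
      moreover have "(nxt r P ^^ m) x0 < z" using it_mono[OF r, of m n P x0] m n e by simp
      ultimately show "(nxt r P ^^ m) x0 \<notin> WV r P" using zl by force
    qed
    then show "Q \<in> fwd_points (st c s r P x0)" unfolding fwd_char[OF c r s] using Q n by blast
  qed
qed

lemma fwd_all_sub:
  assumes c: "c > 0" and r: "r > 0" and s: "s = c*r" and x0: "x0 \<in> EV r P"
  shows "fwd_points (st c s r P x0) \<subseteq> pt r P ` (EV r P \<inter> {x0..})"
  unfolding fwd_char[OF c r s] using it_EV[OF r x0] it_ge[OF r] by auto

lemma fwd_nov:
  assumes c: "c > 0" and r: "r > 0" and s: "s = c*r" and x0: "x0 \<in> EV r P"
    and nv: "\<And>w. w \<in> WV r P \<Longrightarrow> x0 < w \<Longrightarrow> False"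
  shows "fwd_points (st c s r P x0) = pt r P ` (EV r P \<inter> {x0..})"
proof
  show "fwd_points (st c s r P x0) \<subseteq> pt r P ` (EV r P \<inter> {x0..})" by (rule fwd_all_sub[OF c r s x0])
  show "pt r P ` (EV r P \<inter> {x0..}) \<subseteq> fwd_points (st c s r P x0)"
  proof
    fix Q assume "Q \<in> pt r P ` (EV r P \<inter> {x0..})"
    then obtain e where e: "e \<in> EV r P" "x0 \<le> e" and Q: "Q = pt r P e" by auto
    obtain n where n: "(nxt r P ^^ n) x0 = e" using it_all[OF r x0 e(1,2)] by blast
    have "\<forall>m. 0 < m \<and> m < n \<longrightarrow> (nxt r P ^^ m) x0 \<notin> WV r P"
    proof (intro allI impI)
      fix m assume m: "0 < m \<and> m < n"
      have "x0 < (nxt r P ^^ m) x0" using it_mono[OF r, of 0 m P x0] m by simp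
      then show "(nxt r P ^^ m) x0 \<notin> WV r P" using nv by blast
    qed
    then show "Q \<in> fwd_points (st c s r P x0)" unfolding fwd_char[OF c r s] using Q n by blast
  qed
qed

lemma it_count:
  assumes r: "r > 0" and x0: "x0 \<in> EV r P" and e: "e \<in> EV r P" "x0 \<le> e"
    and fin: "card (EV r P \<inter> {x0..<e}) = N"
  shows "(nxt r P ^^ N) x0 = e"
proof -
  obtain n where n: "(nxt r P ^^ n) x0 = e" using it_all[OF r x0 e] by blast
  have "strict_mono (\<lambda>m. (nxt r P ^^ m) x0)" by (rule strict_monoI) (rule it_mono[OF r])
  then have inj: "inj (\<lambda>m. (nxt r P ^^ m) x0)" by (rule strict_mono_imp_inj_on)
  have "card (EV r P \<inter> {x0..<e}) = n"
    using it_set[OF r x0, of n] n inj by (simp add: card_image inj_on_subset)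
  then show ?thesis using fin n by simp
qed



lemma fd_of_int: "fd (of_int n) = (if even n then 0 else 1)" "sgf (of_int n) = (if even n then 1 else -1)"
  unfolding fd_def sgf_def by simp_all

lemma fd_per: "fd (u + 2 * of_int m) = fd u" "sgf (u + 2 * of_int m) = sgf u"
proof -
  have e: "u + 2 * of_int m = u + of_int (2*m)" by simp
  have "\<lfloor>u + 2 * of_int m\<rfloor> = \<lfloor>u\<rfloor> + 2*m" unfolding e by (simp only: floor_add_int[symmetric])
  moreover have "frac (u + 2 * of_int m) = frac u" unfolding e by (simp only: frac_add_of_int_right)
  ultimately show "fd (u + 2 * of_int m) = fd u" "sgf (u + 2 * of_int m) = sgf u"
    unfolding fd_def sgf_def by auto
qed

lemma fd_neg: "fd (-u) = fd u"
proof (cases "u \<in> \<int>")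
  case True
  then obtain n where n: "u = of_int n" by (auto elim: Ints_cases)
  have e: "-u = of_int (-n)" using n by simp
  have "fd (-u) = (if even (-n) then 0 else 1)" unfolding e by (rule fd_of_int)
  moreover have "fd u = (if even n then 0 else 1)" unfolding n by (rule fd_of_int)
  ultimately show ?thesis by simp
next
  case False
  have fr: "frac (-u) = 1 - frac u" using False by (simp add: frac_neg)
  have "\<lfloor>-u\<rfloor> = - \<lfloor>u\<rfloor> - 1"
  proof -
    have "of_int \<lfloor>-u\<rfloor> = -u - frac (-u)" by (simp add: frac_def)
    also have "\<dots> = of_int (- \<lfloor>u\<rfloor> - 1)" using fr by (simp add: frac_def)
    finally show ?thesis by (simp only: of_int_eq_iff)
  qed
  then show ?thesis using fr unfolding fd_def by auto
qed

lemma fd_eq: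
  assumes "fd u = fd v"
  shows "(\<exists>m::int. u - v = 2 * of_int m) \<or> (\<exists>m::int. u + v = 2 * of_int m)"
proof -
  have u: "u = of_int \<lfloor>u\<rfloor> + frac u" and v: "v = of_int \<lfloor>v\<rfloor> + frac v" by (simp_all add: frac_def)
  consider "even \<lfloor>u\<rfloor>" "even \<lfloor>v\<rfloor>" | "odd \<lfloor>u\<rfloor>" "odd \<lfloor>v\<rfloor>" | "even \<lfloor>u\<rfloor>" "odd \<lfloor>v\<rfloor>" | "odd \<lfloor>u\<rfloor>" "even \<lfloor>v\<rfloor>" by blast
  then show ?thesis
  proof cases
    case 1
    then have "frac u = frac v" using assms unfolding fd_def by simp
    moreover have "even (\<lfloor>u\<rfloor> - \<lfloor>v\<rfloor>)" using 1 by simp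
    then obtain k where k: "\<lfloor>u\<rfloor> - \<lfloor>v\<rfloor> = 2*k" by (rule evenE)
    ultimately have "u - v = of_int (\<lfloor>u\<rfloor> - \<lfloor>v\<rfloor>)" using u v by (simp add: frac_def)
    then have "u - v = 2 * of_int k" using k by simp
    then show ?thesis by blast
  next
    case 2
    then have "frac u = frac v" using assms unfolding fd_def by simp
    moreover have "even (\<lfloor>u\<rfloor> - \<lfloor>v\<rfloor>)" using 2 by simp
    then obtain k where k: "\<lfloor>u\<rfloor> - \<lfloor>v\<rfloor> = 2*k" by (rule evenE)
    ultimately have "u - v = of_int (\<lfloor>u\<rfloor> - \<lfloor>v\<rfloor>)" using u v by (simp add: frac_def)
    then have "u - v = 2 * of_int k" using k by simp
    then show ?thesis by blast
  next
    case 3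
    then have f: "frac u = 1 - frac v" using assms unfolding fd_def by simp
    have "even (\<lfloor>u\<rfloor> + \<lfloor>v\<rfloor> + 1)" using 3 by simp
    then obtain k where k: "\<lfloor>u\<rfloor> + \<lfloor>v\<rfloor> + 1 = 2*k" by (rule evenE)
    have "u + v = of_int (\<lfloor>u\<rfloor> + \<lfloor>v\<rfloor> + 1)" using u v f by simp
    then have "u + v = 2 * of_int k" using k by simp
    then show ?thesis by blast
  next
    case 4
    then have f: "frac u = 1 - frac v" using assms unfolding fd_def by simp
    have "even (\<lfloor>u\<rfloor> + \<lfloor>v\<rfloor> + 1)" using 4 by simp
    then obtain k where k: "\<lfloor>u\<rfloor> + \<lfloor>v\<rfloor> + 1 = 2*k" by (rule evenE)
    have "u + v = of_int (\<lfloor>u\<rfloor> + \<lfloor>v\<rfloor> + 1)" using u v f by simp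
    then have "u + v = 2 * of_int k" using k by simp
    then show ?thesis by blast
  qed
qed

lemma core:
  fixes a b k1 k2 :: int and C :: real
  assumes a: "a > 0" and b: "b > 0" and cop: "coprime a b"
    and par: "even k1 = even k2"
    and eq: "fd (C + of_int k1 * of_int b / of_int a) = fd (C + of_int k2 * of_int b / of_int a)"
  shows "(\<exists>j. k1 - k2 = a*j \<and> (odd j \<longrightarrow> even a \<and> even b)) \<or>
         (\<exists>t m. k1 + k2 = 2*t \<and> C + of_int t * of_int b / of_int a = of_int m)"
proof -
  from fd_eq[OF eq] show ?thesis
  proof
    assume "\<exists>m::int. C + of_int k1 * of_int b / of_int a - (C + of_int k2 * of_int b / of_int a) = 2 * of_int m"
    then obtain m where m: "C + of_int k1 * of_int b / of_int a - (C + of_int k2 * of_int b / of_int a) = 2 * of_int m" by blast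
    have "(of_int k1 * of_int b - of_int k2 * of_int b) / of_int a = 2 * (of_int m :: real)"
      using m by (simp add: diff_divide_distrib)
    then have "of_int k1 * of_int b - of_int k2 * of_int b = 2 * (of_int m :: real) * of_int a"
      using a by (simp add: divide_eq_eq)
    then have "real_of_int ((k1 - k2) * b) = of_int (2*m*a)" by (simp add: algebra_simps)
    then have e: "(k1 - k2) * b = 2*m*a" by (simp only: of_int_eq_iff)
    then have "a dvd (k1 - k2) * b" by (metis dvd_triv_right)
    then have "a dvd k1 - k2" using cop by (simp add: coprime_dvd_mult_left_iff)
    then obtain j where j: "k1 - k2 = a*j" by blast
    have "a * (j * b) = a * (2*m)" using e j by (simp add: algebra_simps)
    then have jb: "j*b = 2*m" using a by simp
    have "odd j \<longrightarrow> even a \<and> even b"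
    proof
      assume oj: "odd j"
      have "even (j*b)" using jb by simp
      then have "even b" using oj by simp
      moreover have "even (k1 - k2)" using par by simp
      then have "even (a*j)" using j by simp
      then have "even a" using oj by simp
      ultimately show "even a \<and> even b" by simp
    qed
    then show ?thesis using j by blast
  next
    assume "\<exists>m::int. C + of_int k1 * of_int b / of_int a + (C + of_int k2 * of_int b / of_int a) = 2 * of_int m"
    then obtain m where m: "C + of_int k1 * of_int b / of_int a + (C + of_int k2 * of_int b / of_int a) = 2 * of_int m" by blast
    obtain t where t: "k1 + k2 = 2*t" using par by (metis evenE even_add)
    have "2 * (C + of_int t * of_int b / of_int a) = 2 * of_int m"
    proof -
      have kk: "real_of_int k1 + of_int k2 = 2 * of_int t" using t by (metis of_int_add of_int_mult of_int_numeral)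
      have "C + of_int k1 * of_int b / of_int a + (C + of_int k2 * of_int b / of_int a)
          = 2*C + (of_int k1 + of_int k2) * of_int b / of_int a" by (simp add: add_divide_distrib distrib_right)
      also have "\<dots> = 2 * (C + of_int t * of_int b / of_int a)" unfolding kk by simp
      finally show ?thesis using m by simp
    qed
    then have "C + of_int t * of_int b / of_int a = of_int m" by simp
    then show ?thesis using t by blast
  qed
qed



lemma small_mult1: fixes a j :: int assumes "a > 0" "-a < a*j" "a*j < a" shows "j = 0"
proof (rule ccontr)
  assume "j \<noteq> 0"
  then consider "j \<ge> 1" | "j \<le> -1" by linarith
  then show False
  proof cases
    case 1 then have "a*1 \<le> a*j" using assms by (intro mult_left_mono) auto
    then show False using assms by linarith
  next
    case 2 then have "a*j \<le> a*(-1)" using assms by (intro mult_left_mono) auto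
    then show False using assms by linarith
  qed
qed

lemma small_mult2: fixes a j :: int assumes "a > 0" "-2*a < a*j" "a*j < 2*a" shows "j = -1 \<or> j = 0 \<or> j = 1"
proof (rule ccontr)
  assume "\<not> ?thesis"
  then consider "j \<ge> 2" | "j \<le> -2" by linarith
  then show False
  proof cases
    case 1 then have "a*2 \<le> a*j" using assms by (intro mult_left_mono) auto
    then show False using assms by linarith
  next
    case 2 then have "a*j \<le> a*(-2)" using assms by (intro mult_left_mono) auto
    then show False using assms by linarith
  qed
qed

lemma fd_refl: "fd (2 - x) = fd x"
proof -
  have "2 - x = -x + 2 * of_int (1::int)" by simp
  then have "fd (2 - x) = fd (-x)" using fd_per(1)[of "-x" 1] by simp
  then show ?thesis by (simp add: fd_neg)
qed

lemma pt_refl: "pt r (2-P) x = pt r P (2-x)"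
proof -
  have "r * (x - (2 - P)) = - (r * ((2-x) - P))" by (simp add: algebra_simps)
  then show ?thesis unfolding pt_def using fd_refl[of x] fd_neg by simp
qed

lemma Ints_refl: "((2::real) - x \<in> \<int>) = (x \<in> \<int>)"
proof
  assume "2 - x \<in> \<int>" then have "2 - (2 - x) \<in> \<int>" by (intro Ints_diff) auto
  then show "x \<in> \<int>" by simp
next
  assume "x \<in> \<int>" then show "2 - x \<in> \<int>" by (intro Ints_diff) auto
qed

lemma r_refl: "(r * (x - (2 - P)) \<in> \<int>) = (r * ((2-x) - P) \<in> \<int>)"
proof -
  have "r * (x - (2 - P)) = - (r * ((2-x) - P))" by (simp add: algebra_simps)
  then show ?thesis by (simp only: minus_in_Ints_iff)
qed

lemma EV_refl: "x \<in> EV r (2-P) \<longleftrightarrow> 2 - x \<in> EV r P"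
  unfolding EV_def using Ints_refl[of x] r_refl[of r x P] by simp

lemma WV_refl: "x \<in> WV r (2-P) \<longleftrightarrow> 2 - x \<in> WV r P"
  unfolding WV_def using Ints_refl[of x] r_refl[of r x P] by simp

lemma inward_int: "c > 0 \<Longrightarrow> s > 0 \<Longrightarrow>
   inward (fd (of_int n1), fd (of_int n2)) (sgf (of_int n1) * c, sgf (of_int n2) * s)"
  unfolding inward_def by (simp add: fd_of_int)

context
  fixes a b :: int and P0 r :: real
  assumes a: "a > 0" and b: "b > 0" and cop: "coprime a b" and rdef: "r = of_int a / of_int b"
begin

lemma r_pos: "r > 0" using a b rdef by simp

definition XX :: "int \<Rightarrow> real" where "XX k = P0 + of_int k * of_int b / of_int a"

lemma r_XX: "r * (XX k - P0) = of_int k"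
  unfolding XX_def rdef using a b by (simp add: field_simps)

lemma XX_of: "r * (x - P0) = of_int k \<Longrightarrow> x = XX k"
  unfolding XX_def rdef using a b by (simp add: field_simps)

lemma XX_diff: "XX k1 - XX k2 = of_int (k1 - k2) * of_int b / of_int a"
  unfolding XX_def using a by (simp add: field_simps)

lemma XX_mono: "XX k1 < XX k2 \<longleftrightarrow> k1 < k2"
proof -
  have "XX k1 < XX k2 \<longleftrightarrow> 0 < XX k2 - XX k1" by simp
  also have "\<dots> \<longleftrightarrow> 0 < of_int (k2 - k1) * of_int b / (of_int a :: real)" by (simp only: XX_diff)
  also have "\<dots> \<longleftrightarrow> k1 < k2" using a b by (simp add: zero_less_divide_iff zero_less_mult_iff)
  finally show ?thesis .
qed

lemma r_int: "r * (of_int n - P0) = - (of_int a * P0 / of_int b) + of_int n * of_int a / of_int b"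
  unfolding rdef using a b by (simp add: field_simps)

lemma EV_cases: "x \<in> EV r P0 \<Longrightarrow> (\<exists>n. x = of_int n) \<or> (\<exists>k. x = XX k)"
  unfolding EV_def by (auto elim!: Ints_cases intro: XX_of)

lemma pt_XX: "pt r P0 (XX k) = (fd (XX k), fd (of_int k))"
  unfolding pt_def r_XX ..

lemma par_of_fd: "fd (of_int k1) = fd (of_int k2) \<Longrightarrow> even k1 = even k2"
  by (auto simp: fd_of_int split: if_splits)

lemma on_AB_pt: "on_AB_CD (pt r P0 x) \<longleftrightarrow> r*(x-P0) \<in> \<int>"
  unfolding on_AB_CD_def pt_def using fd_01_iff by simp

lemma on_BC_pt: "on_BC_DA (pt r P0 x) \<longleftrightarrow> x \<in> \<int>"
  unfolding on_BC_DA_def pt_def using fd_01_iff by simp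

context
  fixes l xa m0 :: int
  assumes l: "P0 * of_int a = of_int l" and xa: "a * xa - l = b * m0"
begin

lemma xa_XX: "(of_int xa :: real) = XX m0"
proof (rule XX_of)
  have "r * (of_int xa - P0) = (of_int a * of_int xa - P0 * of_int a) / of_int b"
    unfolding rdef by (simp add: field_simps)
  also have "\<dots> = of_int (a*xa - l) / of_int b" using l by simp
  also have "\<dots> = of_int m0" using xa b by simp
  finally show "r * (of_int xa - P0) = of_int m0" .
qed

lemma WV_struct: assumes "w \<in> WV r P0" shows "\<exists>j. w = of_int (xa + b*j)"
proof -
  obtain n where n: "w = of_int n" using assms unfolding WV_def by (auto elim: Ints_cases)
  obtain m where m: "r * (w - P0) = of_int m" using assms unfolding WV_def by (auto elim: Ints_cases)
  have "r * (w - P0) = (of_int a * of_int n - P0 * of_int a) / of_int b"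
    unfolding rdef n by (simp add: field_simps)
  also have "\<dots> = of_int (a*n - l) / of_int b" using l by simp
  finally have "of_int (a*n - l) = (of_int (m * b) :: real)" using m b by (simp add: field_simps)
  then have e: "a*n - l = m*b" by (simp only: of_int_eq_iff)
  have "(n - xa) * a = b * (m - m0)" using e xa by (simp add: algebra_simps)
  then have "b dvd (n - xa) * a" by simp
  then have "b dvd n - xa" using cop by (simp add: coprime_dvd_mult_left_iff coprime_commute)
  then obtain j where "n - xa = b*j" by blast
  then have "n = xa + b*j" by simp
  then show ?thesis using n by blast
qed

lemma xa_WV: "of_int (xa + b*j) \<in> WV r P0"
proof -
  have "r * (of_int (xa + b*j) - P0) = r * (of_int xa - P0) + r * (of_int b * of_int j)"
    by (simp add: algebra_simps)
  also have "\<dots> = of_int (m0 + a*j)" using xa_XX r_XX[of m0] unfolding rdef using b by simp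
  finally show ?thesis unfolding WV_def by simp
qed

lemma noWV_between: assumes "w \<in> WV r P0" "of_int xa < w" "w < of_int xa + of_int b" shows False
proof -
  obtain j where j: "w = of_int (xa + b*j)" using WV_struct[OF assms(1)] by blast
  have "(of_int xa::real) < of_int (xa + b*j)" "(of_int (xa + b*j)::real) < of_int (xa + b)"
    using assms(2,3) unfolding j by simp_all
  then have "xa < xa + b*j" "xa + b*j < xa + b" by (simp_all only: of_int_less_iff)
  then have "-b < b*j" "b*j < b" by simp_all
  then have "j = 0" using small_mult1[OF b] by blast
  then show False using j assms(2) by simp
qed

lemma G_eq:
  assumes c: "c > 0" and s: "s = c*r"
  shows "fwd_points (st c s r P0 (of_int xa)) = pt r P0 ` (EV r P0 \<inter> {of_int xa..of_int xa + of_int b})"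
proof -
  have "of_int xa \<in> EV r P0" "of_int xa + of_int b \<in> WV r P0"
    using xa_WV[of 0] xa_WV[of 1] unfolding EV_def WV_def by auto
  moreover have "\<And>w. w \<in> WV r P0 \<Longrightarrow> of_int xa < w \<Longrightarrow> of_int xa + of_int b \<le> w"
    using noWV_between by force
  ultimately show ?thesis using b by (intro fwd_eq[OF c r_pos s]) auto
qed

abbreviation "GG \<equiv> pt r P0 ` (EV r P0 \<inter> {of_int xa..of_int xa + of_int b})"

lemma GG_minus: "GG - sq_vertices = pt r P0 ` (EV r P0 \<inter> {of_int xa<..<of_int xa + of_int b})"
proof -
  have e1: "of_int xa \<in> WV r P0" "of_int xa + of_int b \<in> WV r P0"
    using xa_WV[of 0] xa_WV[of 1] by auto
  show ?thesis
  proof (intro equalityI subsetI)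
    fix Q assume "Q \<in> GG - sq_vertices"
    then obtain x where x: "x \<in> EV r P0" "of_int xa \<le> x" "x \<le> of_int xa + of_int b" "Q = pt r P0 x"
      and nv: "x \<notin> WV r P0" by (auto simp: pt_vertex_iff)
    have "x \<noteq> of_int xa" "x \<noteq> of_int xa + of_int b" using nv e1 by auto
    then show "Q \<in> pt r P0 ` (EV r P0 \<inter> {of_int xa<..<of_int xa + of_int b})" using x by auto
  next
    fix Q assume "Q \<in> pt r P0 ` (EV r P0 \<inter> {of_int xa<..<of_int xa + of_int b})"
    then obtain x where x: "x \<in> EV r P0" "of_int xa < x" "x < of_int xa + of_int b" "Q = pt r P0 x" by auto
    have "x \<notin> WV r P0" using noWV_between x by blast
    then show "Q \<in> GG - sq_vertices" using x by (auto simp: pt_vertex_iff)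
  qed
qed

lemma HA_eq: "{Q \<in> GG - sq_vertices. on_AB_CD Q} = (\<lambda>k. pt r P0 (XX k)) ` {m0<..<m0+a}"
proof (intro equalityI subsetI)
  fix Q assume "Q \<in> {Q \<in> GG - sq_vertices. on_AB_CD Q}"
  then obtain x where x: "x \<in> EV r P0" "of_int xa < x" "x < of_int xa + of_int b" "Q = pt r P0 x"
    and ab: "r*(x-P0) \<in> \<int>" unfolding GG_minus by (auto simp: on_AB_pt)
  obtain k where k: "r*(x-P0) = of_int k" using ab by (auto elim: Ints_cases)
  have xk: "x = XX k" by (rule XX_of[OF k])
  have "XX m0 < XX k" "XX k < XX (m0 + a)"
    using x xk xa_XX XX_diff[of "m0+a" m0] a by auto
  then have "k \<in> {m0<..<m0+a}" by (simp add: XX_mono)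
  then show "Q \<in> (\<lambda>k. pt r P0 (XX k)) ` {m0<..<m0+a}" using x xk by auto
next
  fix Q assume "Q \<in> (\<lambda>k. pt r P0 (XX k)) ` {m0<..<m0+a}"
  then obtain k where k: "m0 < k" "k < m0 + a" "Q = pt r P0 (XX k)" by auto
  have "XX m0 < XX k" "XX k < XX (m0 + a)" using k by (simp_all add: XX_mono)
  then have "of_int xa < XX k" "XX k < of_int xa + of_int b"
    using xa_XX XX_diff[of "m0+a" m0] a by auto
  moreover have rk: "r * (XX k - P0) \<in> \<int>" unfolding r_XX by simp
  moreover have "XX k \<in> EV r P0" using rk unfolding EV_def by simp
  ultimately show "Q \<in> {Q \<in> GG - sq_vertices. on_AB_CD Q}" unfolding GG_minus
    using k by (auto simp: on_AB_pt)
qed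

lemma HB_eq: "{Q \<in> GG - sq_vertices. on_BC_DA Q} = (\<lambda>n. pt r P0 (of_int n)) ` {xa<..<xa+b}"
proof (intro equalityI subsetI)
  fix Q assume "Q \<in> {Q \<in> GG - sq_vertices. on_BC_DA Q}"
  then obtain x where x: "x \<in> EV r P0" "of_int xa < x" "x < of_int xa + of_int b" "Q = pt r P0 x"
    and ab: "x \<in> \<int>" unfolding GG_minus by (auto simp: on_BC_pt)
  obtain n where n: "x = of_int n" using ab by (auto elim: Ints_cases)
  have "n \<in> {xa<..<xa+b}" using x n by simp
  then show "Q \<in> (\<lambda>n. pt r P0 (of_int n)) ` {xa<..<xa+b}" using x n by auto
next
  fix Q assume "Q \<in> (\<lambda>n. pt r P0 (of_int n)) ` {xa<..<xa+b}"
  then obtain n where n: "xa < n" "n < xa + b" "Q = pt r P0 (of_int n)" by auto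
  moreover have "(of_int n :: real) \<in> EV r P0" unfolding EV_def by auto
  ultimately show "Q \<in> {Q \<in> GG - sq_vertices. on_BC_DA Q}" unfolding GG_minus
    by (auto simp: on_BC_pt)
qed

lemma GG_split: "GG - sq_vertices = {Q \<in> GG - sq_vertices. on_AB_CD Q} \<union> {Q \<in> GG - sq_vertices. on_BC_DA Q}"
  by (auto simp: on_AB_pt on_BC_pt EV_def)

lemma GG_disj: "{Q \<in> GG - sq_vertices. on_AB_CD Q} \<inter> {Q \<in> GG - sq_vertices. on_BC_DA Q} = {}"
  by (auto simp: on_AB_pt on_BC_pt pt_vertex_iff WV_def)

lemma injA: "inj_on (\<lambda>k. pt r P0 (XX k)) {m0<..<m0+a}"
proof (rule inj_onI)
  fix k1 k2 assume k1: "k1 \<in> {m0<..<m0+a}" and k2: "k2 \<in> {m0<..<m0+a}"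
    and e: "pt r P0 (XX k1) = pt r P0 (XX k2)"
  have p: "even k1 = even k2" using e unfolding pt_XX by (intro par_of_fd) simp
  have "fd (XX k1) = fd (XX k2)" using e unfolding pt_XX by simp
  then have f: "fd (P0 + of_int k1 * of_int b / of_int a) = fd (P0 + of_int k2 * of_int b / of_int a)"
    unfolding XX_def .
  from core[OF a b cop p f] show "k1 = k2"
  proof
    assume "\<exists>j. k1 - k2 = a*j \<and> (odd j \<longrightarrow> even a \<and> even b)"
    then obtain j where j: "k1 - k2 = a*j" by blast
    have h1: "-a < a*j" using j k1 k2 by (simp only: greaterThanLessThan_iff) linarith
    have h2: "a*j < a" using j k1 k2 by (simp only: greaterThanLessThan_iff) linarith
    have "j = 0" by (rule small_mult1[OF a h1 h2])
    then show ?thesis using j by simp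
  next
    assume "\<exists>t m. k1 + k2 = 2*t \<and> P0 + of_int t * of_int b / of_int a = of_int m"
    then obtain t m where t: "k1 + k2 = 2*t" and m: "P0 + of_int t * of_int b / of_int a = of_int m" by blast
    have xt: "XX t = of_int m" using m unfolding XX_def .
    have "XX t \<in> \<int>" using xt by simp
    moreover have "r*(XX t - P0) \<in> \<int>" unfolding r_XX by simp
    ultimately have "XX t \<in> WV r P0" by (simp add: WV_def)
    moreover have "m0 < t" "t < m0 + a" using t k1 k2 by auto
    then have "XX m0 < XX t" "XX t < XX (m0 + a)" by (simp_all add: XX_mono)
    then have "of_int xa < XX t" "XX t < of_int xa + of_int b"
      using xa_XX XX_diff[of "m0+a" m0] a by auto
    ultimately show ?thesis using noWV_between by blast
  qed
qed

lemma injB: "inj_on (\<lambda>n. pt r P0 (of_int n)) {xa<..<xa+b}"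
proof (rule inj_onI)
  fix k1 k2 assume k1: "k1 \<in> {xa<..<xa+b}" and k2: "k2 \<in> {xa<..<xa+b}"
    and e: "pt r P0 (of_int k1) = pt r P0 (of_int k2)"
  have p: "even k1 = even k2" using e unfolding pt_def by (intro par_of_fd) simp
  have f: "fd (- (of_int a * P0 / of_int b) + of_int k1 * of_int a / of_int b) =
           fd (- (of_int a * P0 / of_int b) + of_int k2 * of_int a / of_int b)"
    using e unfolding pt_def r_int by simp
  have cop': "coprime b a" using cop by (simp add: coprime_commute)
  from core[OF b a cop' p f] show "k1 = k2"
  proof
    assume "\<exists>j. k1 - k2 = b*j \<and> (odd j \<longrightarrow> even b \<and> even a)"
    then obtain j where j: "k1 - k2 = b*j" by blast
    have h1: "-b < b*j" using j k1 k2 by (simp only: greaterThanLessThan_iff) linarith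
    have h2: "b*j < b" using j k1 k2 by (simp only: greaterThanLessThan_iff) linarith
    have "j = 0" by (rule small_mult1[OF b h1 h2])
    then show ?thesis using j by simp
  next
    assume "\<exists>t m. k1 + k2 = 2*t \<and> - (of_int a * P0 / of_int b) + of_int t * of_int a / of_int b = (of_int m::real)"
    then obtain t m where t: "k1 + k2 = 2*t" and m: "- (of_int a * P0 / of_int b) + of_int t * of_int a / of_int b = (of_int m::real)" by blast
    have "r * (of_int t - P0) = of_int m" unfolding r_int using m .
    then have "(of_int t :: real) \<in> WV r P0" unfolding WV_def by simp
    moreover have "xa < t" "t < xa + b" using t k1 k2 by auto
    ultimately show ?thesis using noWV_between by force
  qed
qed

lemma sing_main:
  assumes c: "c > 0" and s: "s = c*r" and P0: "0 \<le> P0" "P0 < 1" and xab: "-b < xa" "xa \<le> 0"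
  defines "T \<equiv> fwd_points (st c s r P0 P0) \<union> (if P0 = 0 then {} else fwd_points (st c s r (2-P0) (2-P0)))"
  shows "T \<inter> sq_vertices \<noteq> {} \<and> (\<exists>G. gen_diagonal G \<and> T \<subseteq> G \<and> finite G \<and>
     diag_length G = nat (a+b-2) \<and> card {Q \<in> G - sq_vertices. on_AB_CD Q} = nat (a-1) \<and>
     card {Q \<in> G - sq_vertices. on_BC_DA Q} = nat (b-1))"
proof -
  have r: "r > 0" by (rule r_pos)
  have P0E: "P0 \<in> EV r P0" unfolding EV_def by simp
  have zW: "of_int xa + of_int b \<in> WV r P0" using xa_WV[of 1] by simp
  have xa1: "xa + b \<ge> 1" using xab by simp
  then have "(1::real) \<le> of_int xa + of_int b" by (metis of_int_add of_int_le_iff of_int_1)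
  then have Pz: "P0 < of_int xa + of_int b" using P0 by simp
  have xaP: "of_int xa \<le> P0" using xab P0 by simp
  have least: "\<And>w. w \<in> WV r P0 \<Longrightarrow> P0 < w \<Longrightarrow> of_int xa + of_int b \<le> w"
  proof -
    fix w assume w: "w \<in> WV r P0" "P0 < w"
    obtain j where j: "w = of_int (xa + b*j)" using WV_struct[OF w(1)] by blast
    have "j \<ge> 1"
    proof (rule ccontr)
      assume "\<not> j \<ge> 1"
      then have "b*j \<le> b*0" using b by (intro mult_left_mono) auto
      then have "xa + b*j \<le> 0" using xab by simp
      then have "w \<le> 0" unfolding j by (metis of_int_le_0_iff)
      then show False using w P0 by simp
    qed
    then have "b*1 \<le> b*j" using b by (intro mult_left_mono) auto
    then have "xa + b \<le> xa + b*j" by simp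
    then show "of_int xa + of_int b \<le> w" unfolding j by (metis of_int_add of_int_le_iff)
  qed
  have fwdeq: "fwd_points (st c s r P0 P0) = pt r P0 ` (EV r P0 \<inter> {P0..of_int xa + of_int b})"
    by (rule fwd_eq[OF c r s P0E zW Pz least])
  have sub1: "fwd_points (st c s r P0 P0) \<subseteq> GG"
    unfolding fwdeq using xaP by auto
  have sub2: "P0 \<noteq> 0 \<Longrightarrow> fwd_points (st c s r (2-P0) (2-P0)) \<subseteq> GG"
  proof -
    assume "P0 \<noteq> 0"
    then have P0p: "0 < P0" using P0 by simp
    have E2: "2 - P0 \<in> EV r (2-P0)" using P0E by (simp add: EV_refl)
    have W2: "2 - of_int xa \<in> WV r (2-P0)" using xa_WV[of 0] by (simp add: WV_refl)
    have lt: "2 - P0 < 2 - of_int xa" using xab P0p by simp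
    have "fwd_points (st c s r (2-P0) (2-P0)) \<subseteq> pt r (2-P0) ` (EV r (2-P0) \<inter> {2-P0..2 - of_int xa})"
      by (rule fwd_sub[OF c r s E2 W2 lt])
    also have "\<dots> \<subseteq> GG"
    proof
      fix Q assume "Q \<in> pt r (2-P0) ` (EV r (2-P0) \<inter> {2-P0..2 - of_int xa})"
      then obtain x where x: "x \<in> EV r (2-P0)" "2-P0 \<le> x" "x \<le> 2 - of_int xa" "Q = pt r (2-P0) x" by auto
      have "Q = pt r P0 (2-x)" using x pt_refl by simp
      moreover have "2 - x \<in> EV r P0" using x EV_refl by blast
      moreover have "of_int xa \<le> 2 - x" "2 - x \<le> of_int xa + of_int b" using x Pz by auto
      ultimately show "Q \<in> GG" by auto
    qed
    finally show ?thesis .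
  qed
  have TG: "T \<subseteq> GG" unfolding T_def using sub1 sub2 by auto
  have vert: "pt r P0 (of_int xa + of_int b) \<in> T \<inter> sq_vertices"
  proof -
    have "of_int xa + of_int b \<in> EV r P0" using zW unfolding WV_def EV_def by auto
    then have "pt r P0 (of_int xa + of_int b) \<in> fwd_points (st c s r P0 P0)"
      unfolding fwdeq using Pz by auto
    then show ?thesis unfolding T_def using zW pt_vertex_iff by auto
  qed
  have sp: "s > 0" using s c r by simp
  have gd: "gen_diagonal GG"
  proof -
    have m0e: "r * (of_int xa - P0) = of_int m0" using xa_XX r_XX by simp
    have st_eq: "st c s r P0 (of_int xa) = ((fd (of_int xa), fd (of_int m0)), (sgf (of_int xa) * c, sgf (of_int m0) * s))"
      unfolding st_def pt_def m0e ..
    have V: "(fd (of_int xa), fd (of_int m0)) \<in> sq_vertices"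
      using xa_WV[of 0] pt_vertex_iff[of r P0 "of_int xa"] unfolding pt_def m0e by simp
    show ?thesis unfolding gen_diagonal_def
      using G_eq[OF c s] st_eq V inward_int[OF c sp] by metis
  qed
  have fin: "finite GG" using finite_EV[OF r] by blast
  have cA: "card {Q \<in> GG - sq_vertices. on_AB_CD Q} = nat (a-1)"
    unfolding HA_eq using injA by (simp add: card_image)
  have cB: "card {Q \<in> GG - sq_vertices. on_BC_DA Q} = nat (b-1)"
    unfolding HB_eq using injB by (simp add: card_image)
  have "diag_length GG = card {Q \<in> GG - sq_vertices. on_AB_CD Q} + card {Q \<in> GG - sq_vertices. on_BC_DA Q}"
    unfolding diag_length_def
    by (subst GG_split, rule card_Un_disjoint) (use fin GG_disj in auto)
  then have dl: "diag_length GG = nat (a+b-2)" using cA cB a b by simp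
  show ?thesis using vert gd TG fin dl cA cB by blast
qed

end

lemma not_both_even: "\<not> (even a \<and> even b)"
proof
  assume "even a \<and> even b"
  then have "is_unit (2::int)" using coprime_common_divisor[OF cop] by blast
  then show False by simp
qed

context
  assumes nper: "\<And>j::int. P0 * of_int a \<noteq> of_int j" and P0: "0 \<le> P0" "P0 < 1"
begin

lemma noWV: "w \<in> WV r P0 \<Longrightarrow> False"
proof -
  assume w: "w \<in> WV r P0"
  obtain n where n: "w = of_int n" using w unfolding WV_def by (auto elim: Ints_cases)
  obtain m where m: "r * (w - P0) = of_int m" using w unfolding WV_def by (auto elim: Ints_cases)
  have "r * (w - P0) = (of_int a * of_int n - P0 * of_int a) / of_int b"
    unfolding rdef n by (simp add: field_simps)
  then have "of_int a * of_int n - P0 * of_int a = of_int m * (of_int b :: real)" using m b by (simp add: field_simps)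
  then have "P0 * of_int a = of_int (a*n - m*b)" by simp
  then show False using nper by blast
qed

lemma P0pos: "0 < P0"
proof -
  have "P0 \<noteq> 0" using nper[of 0] by auto
  then show ?thesis using P0 by simp
qed

lemma pt_shift: "pt r P0 (x + 2 * of_int (b*j)) = pt r P0 x"
proof -
  have eqr: "r * (x + 2 * of_int (b*j) - P0) = r * (x - P0) + 2 * of_int (a*j)"
    unfolding rdef using b by (simp add: field_simps)
  have e1: "fd (x + 2 * of_int (b*j)) = fd x" by (rule fd_per(1))
  have e2: "fd (r*(x-P0) + 2 * of_int (a*j)) = fd (r*(x-P0))" by (rule fd_per(1))
  show ?thesis unfolding pt_def eqr e1 e2 ..
qed

lemma EV_shift: "x + 2 * of_int (b*j) \<in> EV r P0 \<longleftrightarrow> x \<in> EV r P0"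
proof -
  have "r * (x + 2 * of_int (b*j) - P0) = r * (x - P0) + of_int (2*a*j)"
    unfolding rdef using b by (simp add: field_simps)
  moreover have "(x + 2 * of_int (b*j) \<in> \<int>) = (x \<in> \<int>)"
  proof
    assume "x + 2 * of_int (b*j) \<in> \<int>"
    then have "x + 2 * of_int (b*j) - of_int (2*b*j) \<in> \<int>" by (intro Ints_diff) auto
    then show "x \<in> \<int>" by simp
  qed auto
  moreover have "(r * (x - P0) + of_int (2*a*j) \<in> \<int>) = (r*(x-P0) \<in> \<int>)"
  proof
    assume "r * (x - P0) + of_int (2*a*j) \<in> \<int>"
    then have "r * (x - P0) + of_int (2*a*j) - of_int (2*a*j) \<in> \<int>" by (intro Ints_diff) auto
    then show "r*(x-P0) \<in> \<int>" by simp
  qed auto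
  ultimately show ?thesis unfolding EV_def by simp
qed

abbreviation "SS \<equiv> pt r P0 ` (EV r P0 \<inter> {P0..<P0 + 2 * of_int b})"

lemma reduce: assumes "x \<in> EV r P0" shows "pt r P0 x \<in> SS"
proof -
  define j where "j = \<lfloor>(x - P0) / (2 * of_int b)\<rfloor>"
  define x' where "x' = x + 2 * of_int (b * (-j))"
  have bb: "(0::real) < 2 * of_int b" using b by simp
  have "of_int j \<le> (x - P0) / (2 * of_int b)" "(x - P0) / (2 * of_int b) < of_int j + 1"
    unfolding j_def by linarith+
  then have "of_int j * (2 * of_int b) \<le> x - P0" "x - P0 < (of_int j + 1) * (2 * of_int b)"
    using bb by (simp_all add: field_simps)
  then have "P0 \<le> x'" "x' < P0 + 2 * of_int b" unfolding x'_def by (simp_all add: algebra_simps)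
  moreover have "x' \<in> EV r P0" unfolding x'_def using EV_shift assms by blast
  moreover have "pt r P0 x' = pt r P0 x" unfolding x'_def by (rule pt_shift)
  ultimately show ?thesis by (metis (no_types, lifting) IntI atLeastLessThan_iff image_eqI)
qed

lemma XX0: "XX 0 = P0" unfolding XX_def by simp
lemma XX2a: "XX (2*a) = P0 + 2 * of_int b" unfolding XX_def using a by simp

lemma EVI_eq: "EV r P0 \<inter> {P0..<P0 + 2 * of_int b} = XX ` {0..<2*a} \<union> of_int ` {1..2*b}"
proof (intro equalityI subsetI)
  fix x assume x: "x \<in> EV r P0 \<inter> {P0..<P0 + 2 * of_int b}"
  from EV_cases[of x] x consider n where "x = of_int n" | k where "x = XX k" by auto
  then show "x \<in> XX ` {0..<2*a} \<union> of_int ` {1..2*b}"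
  proof cases
    case 1
    have "(of_int 0::real) < of_int n" "of_int n < (of_int (1 + 2 * b) :: real)" using x 1 P0pos P0 by auto
    then have "0 < n" "n < 1 + 2*b" by (simp_all only: of_int_less_iff)
    then show ?thesis using 1 by auto
  next
    case 2
    have "XX 0 \<le> XX k" "XX k < XX (2*a)" using x 2 XX0 XX2a by auto
    then have "0 \<le> k" "k < 2*a" by (simp_all add: XX_mono not_less[symmetric])
    then show ?thesis using 2 by auto
  qed
next
  fix x assume x: "x \<in> XX ` {0..<2*a} \<union> of_int ` {1..2*b}"
  then consider k where "x = XX k" "0 \<le> k" "k < 2*a" | n where "x = of_int n" "1 \<le> n" "n \<le> 2*b" by auto
  then show "x \<in> EV r P0 \<inter> {P0..<P0 + 2 * of_int b}"
  proof cases
    case 1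
    have "XX 0 \<le> XX k" "XX k < XX (2*a)" using 1 by (simp_all add: XX_mono not_less[symmetric])
    moreover have "r * (XX k - P0) \<in> \<int>" unfolding r_XX by simp
    ultimately show ?thesis using 1 XX0 XX2a unfolding EV_def by auto
  next
    case 2
    have "(1::real) \<le> of_int n" "(of_int n :: real) \<le> 2 * of_int b"
      using 2 by (metis of_int_1 of_int_le_iff, metis of_int_le_iff of_int_mult of_int_numeral)
    then show ?thesis using 2 P0 P0pos unfolding EV_def by auto
  qed
qed

lemma XX_inj: "inj XX"
  by (rule injI) (metis XX_mono not_less_iff_gr_or_eq)

lemma card_EVI: "card (EV r P0 \<inter> {P0..<P0 + 2 * of_int b}) = nat (2*a + 2*b)"
proof -
  have d: "XX ` {0..<2*a} \<inter> of_int ` {1..2*b} = {}"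
  proof -
    { fix k n assume "XX k = (of_int n :: real)"
      then have "XX k \<in> WV r P0" unfolding WV_def using r_XX[of k] by simp
      then have False by (rule noWV) }
    then show ?thesis by blast
  qed
  have "card (XX ` {0..<2*a} \<union> of_int ` {1..2*b}) = card (XX ` {0..<2*a}) + card ((of_int :: int \<Rightarrow> real) ` {1..2*b})"
    by (rule card_Un_disjoint) (use d in auto)
  also have "\<dots> = nat (2*a) + nat (2*b)"
    using XX_inj by (simp add: card_image inj_on_subset inj_on_def)
  finally show ?thesis unfolding EVI_eq using a b by simp
qed

lemma HAp: "{Q \<in> SS. on_AB_CD Q} = (\<lambda>k. pt r P0 (XX k)) ` {0..<2*a}"
proof -
  have "{Q \<in> SS. on_AB_CD Q} = pt r P0 ` {x \<in> XX ` {0..<2*a} \<union> of_int ` {1..2*b}. r*(x-P0) \<in> \<int>}"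
    unfolding EVI_eq by (auto simp: on_AB_pt)
  also have "{x \<in> XX ` {0..<2*a} \<union> of_int ` {1..2*b}. r*(x-P0) \<in> \<int>} = XX ` {0..<2*a}"
  proof -
    { fix n :: int assume "r*(of_int n - P0) \<in> \<int>"
      then have "of_int n \<in> WV r P0" unfolding WV_def by simp
      then have False by (rule noWV) }
    then show ?thesis using r_XX by auto
  qed
  finally show ?thesis by auto
qed

lemma HBp: "{Q \<in> SS. on_BC_DA Q} = (\<lambda>n. pt r P0 (of_int n)) ` {1..2*b}"
proof -
  have "{Q \<in> SS. on_BC_DA Q} = pt r P0 ` {x \<in> XX ` {0..<2*a} \<union> of_int ` {1..2*b}. x \<in> \<int>}"
    unfolding EVI_eq by (auto simp: on_BC_pt)
  also have "{x \<in> XX ` {0..<2*a} \<union> of_int ` {1..2*b}. x \<in> \<int>} = of_int ` {1..2*b}"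
  proof -
    { fix k :: int assume "XX k \<in> \<int>"
      then have "XX k \<in> WV r P0" unfolding WV_def using r_XX[of k] by simp
      then have False by (rule noWV) }
    then show ?thesis by auto
  qed
  finally show ?thesis by auto
qed

lemma SS_split: "SS = {Q \<in> SS. on_AB_CD Q} \<union> {Q \<in> SS. on_BC_DA Q}"
  by (auto simp: on_AB_pt on_BC_pt EV_def)

lemma SS_disj: "{Q \<in> SS. on_AB_CD Q} \<inter> {Q \<in> SS. on_BC_DA Q} = {}"
proof -
  { fix x assume "x \<in> \<int>" "r*(x-P0) \<in> \<int>" then have False using noWV[of x] by (simp add: WV_def) }
  then show ?thesis by (auto simp: on_AB_pt on_BC_pt)
qed

lemma SS_nov: "SS \<inter> sq_vertices = {}"
  using noWV by (auto simp: pt_vertex_iff)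

lemma injAp: "inj_on (\<lambda>k. pt r P0 (XX k)) {0..<2*a}"
proof (rule inj_onI)
  fix k1 k2 assume k1: "k1 \<in> {0..<2*a}" and k2: "k2 \<in> {0..<2*a}"
    and e: "pt r P0 (XX k1) = pt r P0 (XX k2)"
  have p: "even k1 = even k2" using e unfolding pt_XX by (intro par_of_fd) simp
  have "fd (XX k1) = fd (XX k2)" using e unfolding pt_XX by simp
  then have f: "fd (P0 + of_int k1 * of_int b / of_int a) = fd (P0 + of_int k2 * of_int b / of_int a)"
    unfolding XX_def .
  from core[OF a b cop p f] show "k1 = k2"
  proof
    assume "\<exists>j. k1 - k2 = a*j \<and> (odd j \<longrightarrow> even a \<and> even b)"
    then obtain j where j: "k1 - k2 = a*j" and o: "odd j \<longrightarrow> even a \<and> even b" by blast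
    have h1: "-2*a < a*j" using j k1 k2 by (simp only: atLeastLessThan_iff) linarith
    have h2: "a*j < 2*a" using j k1 k2 by (simp only: atLeastLessThan_iff) linarith
    have "j = -1 \<or> j = 0 \<or> j = 1" by (rule small_mult2[OF a h1 h2])
    moreover have "even j" using o not_both_even by blast
    ultimately have "j = 0" by auto
    then show ?thesis using j by simp
  next
    assume "\<exists>t m. k1 + k2 = 2*t \<and> P0 + of_int t * of_int b / of_int a = of_int m"
    then obtain t m where m: "P0 + of_int t * of_int b / of_int a = of_int m" by blast
    then have "P0 * of_int a = of_int (m*a - t*b)" using a by (simp add: field_simps)
    then show ?thesis using nper by blast
  qed
qed

lemma injBp: "inj_on (\<lambda>n. pt r P0 (of_int n)) {1..2*b}"
proof (rule inj_onI)
  fix k1 k2 assume k1: "k1 \<in> {1..2*b}" and k2: "k2 \<in> {1..2*b}"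
    and e: "pt r P0 (of_int k1) = pt r P0 (of_int k2)"
  have p: "even k1 = even k2" using e unfolding pt_def by (intro par_of_fd) simp
  have f: "fd (- (of_int a * P0 / of_int b) + of_int k1 * of_int a / of_int b) =
           fd (- (of_int a * P0 / of_int b) + of_int k2 * of_int a / of_int b)"
    using e unfolding pt_def r_int by simp
  have cop': "coprime b a" using cop by (simp add: coprime_commute)
  from core[OF b a cop' p f] show "k1 = k2"
  proof
    assume "\<exists>j. k1 - k2 = b*j \<and> (odd j \<longrightarrow> even b \<and> even a)"
    then obtain j where j: "k1 - k2 = b*j" and o: "odd j \<longrightarrow> even b \<and> even a" by blast
    have h1: "-2*b < b*j" using j k1 k2 by (simp only: atLeastAtMost_iff) linarith
    have h2: "b*j < 2*b" using j k1 k2 by (simp only: atLeastAtMost_iff) linarith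
    have "j = -1 \<or> j = 0 \<or> j = 1" by (rule small_mult2[OF b h1 h2])
    moreover have "even j" using o not_both_even by blast
    ultimately have "j = 0" by auto
    then show ?thesis using j by simp
  next
    assume "\<exists>t m. k1 + k2 = 2*t \<and> - (of_int a * P0 / of_int b) + of_int t * of_int a / of_int b = (of_int m::real)"
    then obtain t m where m: "- (of_int a * P0 / of_int b) + of_int t * of_int a / of_int b = (of_int m::real)" by blast
    then have "P0 * of_int a = of_int (t*a - m*b)" using b by (simp add: field_simps)
    then show ?thesis using nper by blast
  qed
qed

lemma per_main:
  assumes c: "c > 0" and s: "s = c*r"
  defines "T \<equiv> fwd_points (st c s r P0 P0) \<union> (if P0 = 0 then {} else fwd_points (st c s r (2-P0) (2-P0)))"
  shows "T \<inter> sq_vertices = {} \<and> bstates (st c s r P0 P0) (nat (2*a+2*b)) = st c s r P0 P0 \<and>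
     finite T \<and> card T = nat (2*a+2*b) \<and> card {Q \<in> T. on_AB_CD Q} = nat (2*a) \<and>
     card {Q \<in> T. on_BC_DA Q} = nat (2*b)"
proof -
  have r: "r > 0" by (rule r_pos)
  have P0E: "P0 \<in> EV r P0" unfolding EV_def by simp
  have fwd1: "fwd_points (st c s r P0 P0) = pt r P0 ` (EV r P0 \<inter> {P0..})"
    by (rule fwd_nov[OF c r s P0E]) (use noWV in blast)
  have "SS \<subseteq> fwd_points (st c s r P0 P0)" unfolding fwd1 by auto
  moreover have "fwd_points (st c s r P0 P0) \<subseteq> SS" unfolding fwd1 using reduce by auto
  moreover have "fwd_points (st c s r (2-P0) (2-P0)) \<subseteq> SS"
  proof -
    have E2: "2 - P0 \<in> EV r (2-P0)" using P0E by (simp add: EV_refl)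
    have "fwd_points (st c s r (2-P0) (2-P0)) \<subseteq> pt r (2-P0) ` (EV r (2-P0) \<inter> {2-P0..})"
      by (rule fwd_all_sub[OF c r s E2])
    also have "\<dots> \<subseteq> SS"
    proof
      fix Q assume "Q \<in> pt r (2-P0) ` (EV r (2-P0) \<inter> {2-P0..})"
      then obtain x where x: "x \<in> EV r (2-P0)" "Q = pt r (2-P0) x" by auto
      have "Q = pt r P0 (2-x)" using x pt_refl by simp
      moreover have "2 - x \<in> EV r P0" using x EV_refl by blast
      ultimately show "Q \<in> SS" using reduce by simp
    qed
    finally show ?thesis .
  qed
  ultimately have TS: "T = SS" unfolding T_def by auto
  have "finite (EV r P0 \<inter> {P0..<P0 + 2 * of_int b})" unfolding EVI_eq by simp
  then have fin: "finite SS" by simp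
  have cA: "card {Q \<in> SS. on_AB_CD Q} = nat (2*a)"
    unfolding HAp using injAp by (simp add: card_image)
  have cB: "card {Q \<in> SS. on_BC_DA Q} = nat (2*b)"
    unfolding HBp using injBp by (simp add: card_image)
  have cS: "card SS = nat (2*a + 2*b)"
  proof -
    have "card SS = card {Q \<in> SS. on_AB_CD Q} + card {Q \<in> SS. on_BC_DA Q}"
      by (subst SS_split, rule card_Un_disjoint) (use fin SS_disj in auto)
    then show ?thesis using cA cB a b by simp
  qed
  have per: "bstates (st c s r P0 P0) (nat (2*a+2*b)) = st c s r P0 P0"
  proof -
    have eE: "P0 + 2 * of_int b \<in> EV r P0"
      using EV_shift[of P0 1] P0E by simp
    have it: "(nxt r P0 ^^ nat (2*a+2*b)) P0 = P0 + 2 * of_int b"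
      by (rule it_count[OF r P0E eE]) (use b card_EVI in auto)
    have "st c s r P0 (P0 + 2 * of_int b) = st c s r P0 P0"
    proof -
      have eq: "r * (P0 + 2 * of_int b - P0) = of_int (2*a)" unfolding rdef using b by simp
      have "sgf (r * (P0 + 2 * of_int b - P0)) = sgf (of_int (2*a))" by (simp only: eq)
      also have "\<dots> = 1" unfolding fd_of_int(2) by simp
      also have "\<dots> = sgf (r * (P0 - P0))" by (simp add: sgf_def)
      finally have "sgf (r * (P0 + 2 * of_int b - P0)) = sgf (r * (P0 - P0))" .
      moreover have "sgf (P0 + 2 * of_int b) = sgf P0" by (rule fd_per(2))
      moreover have "pt r P0 (P0 + 2 * of_int (b*1)) = pt r P0 P0" by (rule pt_shift)
      ultimately show ?thesis unfolding st_def by simp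
    qed
    then show ?thesis using bstates_st[OF c r s] it by simp
  qed
  show ?thesis using TS SS_nov per fin cS cA cB by simp
qed

end

end



lemma xa_exists:
  fixes a b l :: int assumes b: "b > 0" and cop: "coprime a b"
  shows "\<exists>xa m0. a*xa - l = b*m0 \<and> -b < xa \<and> xa \<le> 0"
proof -
  obtain u v where uv: "u * a + v * b = gcd a b" using bezout_int by blast
  then have uv1: "u*a + v*b = 1" using cop by simp
  define n0 where "n0 = u*l"
  define qq where "qq = (-n0) div b"
  define xa where "xa = n0 + b*qq"
  have dm: "qq * b + (-n0) mod b = -n0" unfolding qq_def by (rule div_mult_mod_eq)
  have xa2: "xa = -((-n0) mod b)" unfolding xa_def using dm by (simp add: algebra_simps)
  have "0 \<le> (-n0) mod b" "(-n0) mod b < b" using b by simp_all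
  then have bnd: "-b < xa" "xa \<le> 0" unfolding xa2 by simp_all
  have "a*xa - l = b*(-v*l + a*qq)"
  proof -
    have "a*xa - l = (u*a - 1)*l + a*b*qq" unfolding xa_def n0_def by (simp add: algebra_simps)
    also have "u*a - 1 = -v*b" using uv1 by simp
    finally show ?thesis by (simp add: algebra_simps)
  qed
  then show ?thesis using bnd by blast
qed

theorem mainTheorem10:
  fixes p q :: nat and P0 \<alpha>0 :: real
  assumes "p > 0" and "q > 0" and "gcd p q = 2"
    and "0 < \<alpha>0" and "\<alpha>0 \<le> pi / 2" and "tan \<alpha>0 = real p / real q"
    and "0 \<le> P0" and "P0 < 1"
  shows "(P0 \<in> {2 * real l / real p | l. l < p div 2} \<longrightarrow>
            singular_orbit P0 \<alpha>0 \<and>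
            (\<exists>G. gen_diagonal G \<and> traj_points P0 \<alpha>0 \<subseteq> G \<and> finite G \<and>
                 diag_length G = (p + q) div 2 - 2 \<and>
                 card {P \<in> G - sq_vertices. on_AB_CD P} = p div 2 - 1 \<and>
                 card {P \<in> G - sq_vertices. on_BC_DA P} = q div 2 - 1))
       \<and> (P0 \<notin> {2 * real l / real p | l. l < p div 2} \<longrightarrow>
            periodic_orbit P0 \<alpha>0 (p + q) \<and> in_class_C (p + q) p P0 \<alpha>0)"
proof -
  note pq = assms(1,2) and g = assms(3) and al = assms(4,5) and tn = assms(6) and P0 = assms(7,8)
  define a' where "a' = p div 2"
  define b' where "b' = q div 2"
  have "2 dvd p" "2 dvd q" using g by (metis dvd_refl gcd_dvd1 gcd_dvd2)+
  then have pe: "p = 2*a'" and qe: "q = 2*b'" unfolding a'_def b'_def by auto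
  have "gcd a' b' = 1" using g unfolding pe qe by (simp add: gcd_mult_distrib_nat[symmetric])
  then have cop: "coprime (int a') (int b')" by (simp add: coprime_iff_gcd_eq_1 gcd_int_def)
  define a where "a = int a'"
  define b where "b = int b'"
  have a: "a > 0" and b: "b > 0" using pq pe qe unfolding a_def b_def by auto
  have copab: "coprime a b" using cop unfolding a_def b_def .
  define r where "r = (of_int a / of_int b :: real)"
  have rpq: "real p / real q = r" unfolding r_def a_def b_def pe qe by simp
  have r: "r > 0" unfolding r_def using a b by simp
  define c where "c = cos \<alpha>0"
  define s where "s = sin \<alpha>0"
  have alt: "\<alpha>0 < pi/2"
  proof (rule ccontr)
    assume "\<not> \<alpha>0 < pi/2"
    then have e: "\<alpha>0 = pi/2" using al by simp
    have "tan \<alpha>0 = 0" unfolding e by (simp add: tan_def)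
    then show False using tn rpq r by simp
  qed
  have c: "c > 0" unfolding c_def using al alt by (intro cos_gt_zero_pi) auto
  have s: "s = c*r" using tn rpq c unfolding c_def s_def tan_def by (simp add: field_simps)
  have fd0: "fd P0 = P0" "sgf P0 = 1" "fd 0 = 0" "sgf 0 = 1"
  proof -
    have "\<lfloor>P0\<rfloor> = 0" using P0 by (simp add: floor_eq_iff)
    then show "fd P0 = P0" "sgf P0 = 1" "fd 0 = 0" "sgf 0 = 1" unfolding fd_def sgf_def frac_def by simp_all
  qed
  have gf: "gen_fwd P0 \<alpha>0 = st c s r P0 P0"
    unfolding gen_fwd_def st_def pt_def c_def[symmetric] s_def[symmetric] using fd0 by simp
  have gb: "P0 \<noteq> 0 \<Longrightarrow> gen_bwd P0 \<alpha>0 = st c s r (2-P0) (2-P0)"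
  proof -
    assume "P0 \<noteq> 0"
    then have "0 < P0" using P0 by simp
    then have "\<lfloor>2 - P0\<rfloor> = 1" using P0 by (simp add: floor_eq_iff)
    then have "sgf (2 - P0) = -1" unfolding sgf_def by simp
    moreover have "fd (2 - P0) = P0" using fd_refl[of P0] fd0 by simp
    ultimately show ?thesis
      unfolding gen_bwd_def st_def pt_def c_def[symmetric] s_def[symmetric] using fd0 by simp
  qed
  define T where "T = fwd_points (st c s r P0 P0) \<union> (if P0 = 0 then {} else fwd_points (st c s r (2-P0) (2-P0)))"
  have TT: "traj_points P0 \<alpha>0 = T" unfolding traj_points_def T_def using gf gb by simp
  have setiff: "P0 \<in> {2 * real l / real p | l. l < p div 2} \<longleftrightarrow> (\<exists>j::int. P0 * of_int a = of_int j)"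
  proof
    assume "P0 \<in> {2 * real l / real p | l. l < p div 2}"
    then obtain l where "P0 = 2 * real l / real p" by blast
    then have "P0 * of_int a = of_int (int l)" unfolding a_def pe using pq pe by simp
    then show "\<exists>j::int. P0 * of_int a = of_int j" by blast
  next
    assume "\<exists>j::int. P0 * of_int a = of_int j"
    then obtain j where j: "P0 * of_int a = of_int j" by blast
    have ar: "(0::real) < of_int a" using a by simp
    have "(0::real) \<le> P0 * of_int a" using P0 ar by simp
    then have h1: "(of_int 0::real) \<le> of_int j" using j by simp
    have "P0 * of_int a < 1 * (of_int a :: real)" using P0 ar by (intro mult_strict_right_mono) auto
    then have h2: "(of_int j::real) < of_int a" using j by simp
    note h1 h2
    then have j0: "0 \<le> j" "j < a" by (simp_all only: of_int_le_iff of_int_less_iff)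
    have "P0 = 2 * real (nat j) / real p" using j j0 a unfolding pe a_def by (simp add: field_simps)
    moreover have "nat j < p div 2" using j0 unfolding a_def a'_def by simp
    ultimately show "P0 \<in> {2 * real l / real p | l. l < p div 2}" by blast
  qed
  show ?thesis
  proof (intro conjI impI)
    assume "P0 \<in> {2 * real l / real p | l. l < p div 2}"
    then obtain l where l: "P0 * of_int a = of_int l" using setiff by blast
    obtain xa m0 where xa: "a*xa - l = b*m0" "-b < xa" "xa \<le> 0" using xa_exists[OF b copab] by blast
    note M = sing_main[OF a b copab r_def l xa(1) c s P0 xa(2,3)]
    have e1: "(p + q) div 2 - 2 = nat (a+b-2)" "p div 2 - 1 = nat (a-1)" "q div 2 - 1 = nat (b-1)"
      unfolding a_def b_def pe qe by auto
    show "singular_orbit P0 \<alpha>0" using M unfolding singular_orbit_def TT T_def by blast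
    show "\<exists>G. gen_diagonal G \<and> traj_points P0 \<alpha>0 \<subseteq> G \<and> finite G \<and>
                 diag_length G = (p + q) div 2 - 2 \<and>
                 card {P \<in> G - sq_vertices. on_AB_CD P} = p div 2 - 1 \<and>
                 card {P \<in> G - sq_vertices. on_BC_DA P} = q div 2 - 1"
      unfolding e1 TT T_def using M by blast
  next
    assume "P0 \<notin> {2 * real l / real p | l. l < p div 2}"
    then have nper: "\<And>j::int. P0 * of_int a \<noteq> of_int j" using setiff by blast
    note M = per_main[OF a b copab r_def nper P0 c s]
    have e2: "nat (2*a+2*b) = p + q" "nat (2*a) = p" "nat (2*b) = (p+q) - p"
      unfolding a_def b_def pe qe by auto
    have Mx: "T \<inter> sq_vertices = {}" "bstates (st c s r P0 P0) (p+q) = st c s r P0 P0"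
       "finite T" "card T = p + q" "card {Q \<in> T. on_AB_CD Q} = p" "card {Q \<in> T. on_BC_DA Q} = (p+q) - p"
      using M unfolding T_def e2 by auto
    have po: "periodic_orbit P0 \<alpha>0 (p + q)"
      unfolding periodic_orbit_def singular_orbit_def TT gf using Mx pq by auto
    show "periodic_orbit P0 \<alpha>0 (p + q)" by (rule po)
    show "in_class_C (p + q) p P0 \<alpha>0" unfolding in_class_C_def TT using po Mx by simp
  qed
qed

end
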